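(* Let $s_0,t_0\ge 1$ be real numbers and let $\mathcal T$ be the infinite rooted tree of nodes generated from $(s_0,t_0)$ by the recursive rule described in the context. Put $p=(t_0-s_0)/2$. Then every node $N$ of $\mathcal T$, located at $(x,y)$, of depth $d$ and carrying parameters $(s,t)$, satisfies: (1) $s\ge 1$ and $t\ge 1$; (2) $(t-s)/2=p$; (3) the points $(x,y)+2^{-d}(-1,s)=(x-2^{-d},\,y+2^{-d}s)$ and $(x,y)+2^{-d}(1,t)=(x+2^{-d},\,y+2^{-d}t)$ both lie on the segment of $\mathbb R^2$ with extremities $(-1,s_0)$ and $(1,t_0)$.
   Context: Points of $\mathbb R^2$ are written $(x,y)$ (abscissa = space, ordinate = time). Given real numbers $s_0,t_0\ge 1$, a tree $\mathcal T$ is built recursively. Each node has a location $(x,y)\in\mathbb R^2$, a depth $d\in\mathbb N$ (the number of its ancestors that are split nodes), and a pair of real parameters $(s,t)$. The root is at $(0,0)$, has depth $0$ and parameters $(s_0,t_0)$. A node at $(x,y)$ of depth $d$ with parameters $(s,t)$ is: - a delay node if $s\ge 2$ and $t\ge 2$; it then has exactly one child, located at $(x,\,y+2^{-d})$, of depth $d$, with parameters $(s-1,\,t-1)$; - a split node otherwise (i.e. if $s<2$ or $t<2$); it then has exactly two children, both of depth $d+1$: a left child at $(x-2^{-(d+1)},\,y+2^{-(d+1)})$ with parameters $\bigl(2(s-\tfrac12),\,2(\tfrac{s+t}{2}-\tfrac12)\bigr)=(2s-1,\,s+t-1)$, and a right child at $(x+2^{-(d+1)},\,y+2^{-(d+1)})$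 with parameters $\bigl(2(\tfrac{s+t}{2}-\tfrac12),\,2(t-\tfrac12)\bigr)=(s+t-1,\,2t-1)$. The recursion never stops, so $\mathcal T$ is infinite. (Interpretation: a node at depth $d$ with parameters $(s,t)$ "targets" the segment from $(x,y)+2^{-d}(-1,s)$ to $(x,y)+2^{-d}(1,t)$.) *)

theory Defs
  imports "HOL-Analysis.Analysis"
begin

text \<open>A node is recorded as its location (x,y), its depth d, and its parameters (s,t).\<close>
inductive tree_node :: "real \<Rightarrow> real \<Rightarrow> real \<Rightarrow> real \<Rightarrow> nat \<Rightarrow> real \<Rightarrow> real \<Rightarrow> bool"
  for s0 t0 :: real where
  root: "tree_node s0 t0 0 0 0 s0 t0"
| delay: "tree_node s0 t0 x y d s t \<Longrightarrow> s \<ge> 2 \<Longrightarrow> t \<ge> 2 \<Longrightarrow>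
          tree_node s0 t0 x (y + 1 / 2 ^ d) d (s - 1) (t - 1)"
| split_left: "tree_node s0 t0 x y d s t \<Longrightarrow> s < 2 \<or> t < 2 \<Longrightarrow>
          tree_node s0 t0 (x - 1 / 2 ^ (d + 1)) (y + 1 / 2 ^ (d + 1)) (d + 1)
            (2 * (s - 1/2)) (2 * ((s + t) / 2 - 1/2))"
| split_right: "tree_node s0 t0 x y d s t \<Longrightarrow> s < 2 \<or> t < 2 \<Longrightarrow>
          tree_node s0 t0 (x + 1 / 2 ^ (d + 1)) (y + 1 / 2 ^ (d + 1)) (d + 1)
            (2 * ((s + t) / 2 - 1/2)) (2 * (t - 1/2))"

end

theory Submission
  imports Defs
begin

lemma seg_mem:
  fixes X Y s0 t0 :: real
  assumes "-1 \<le> X" "X \<le> 1" "Y = s0 + (X + 1) * (t0 - s0) / 2"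
  shows "(X, Y) \<in> closed_segment (-1, s0) (1, t0)"
  unfolding closed_segment_def
proof (intro CollectI exI conjI)
  show "0 \<le> (X + 1) / 2" "(X + 1) / 2 \<le> (1::real)" using assms by auto
  show "(X, Y) = (1 - (X + 1) / 2) *\<^sub>R (-1, s0) + ((X + 1) / 2) *\<^sub>R (1, t0)"
    using assms by (simp add: algebra_simps add_divide_distrib diff_divide_distrib)
qed

lemma inv:
  assumes "s0 \<ge> 1" "t0 \<ge> 1" "tree_node s0 t0 x y d s t"
  shows "s \<ge> 1 \<and> t \<ge> 1 \<and> t - s = t0 - s0 \<and> x - 1 / 2 ^ d \<ge> -1 \<and> x + 1 / 2 ^ d \<le> 1
     \<and> y + s / 2 ^ d = s0 + (x - 1 / 2 ^ d + 1) * (t0 - s0) / 2"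
  using assms(3)
proof (induction rule: tree_node.induct)
  case root
  then show ?case using assms by simp
next
  case (delay x y d s t)
  then show ?case by (simp add: diff_divide_distrib)
next
  case (split_left x y d s t)
  have h: "(1::real) / 2 ^ (d+1) = (1 / 2 ^ d) / 2" by simp
  have hp: "(0::real) < 1 / 2 ^ d" by simp
  define H where "H = (1::real) / 2 ^ d"
  have e1: "a / 2 ^ (d+1) = a * H / 2" for a :: real unfolding H_def by simp
  have e2: "a / 2 ^ d = a * H" for a :: real unfolding H_def by simp
  have tt: "t = s + t0 - s0" using split_left.IH by simp
  show ?case using split_left hp unfolding e1 e2 H_def[symmetric] tt
    by (auto simp: field_simps; auto simp: algebra_simps)
next
  case (split_right x y d s t)
  have hp: "(0::real) < 1 / 2 ^ d" by simp
  define H where "H = (1::real) / 2 ^ d"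
  have e1: "a / 2 ^ (d+1) = a * H / 2" for a :: real unfolding H_def by simp
  have e2: "a / 2 ^ d = a * H" for a :: real unfolding H_def by simp
  have tt: "t = s + t0 - s0" using split_right.IH by simp
  show ?case using split_right hp unfolding e1 e2 H_def[symmetric] tt
    by (auto simp: field_simps; auto simp: algebra_simps)
qed

theorem lemma1:
  fixes s0 t0 x y s t :: real and d :: nat
  assumes "s0 \<ge> 1" and "t0 \<ge> 1"
    and "tree_node s0 t0 x y d s t"
  shows "s \<ge> 1 \<and> t \<ge> 1
    \<and> (t - s) / 2 = (t0 - s0) / 2
    \<and> (x - 1 / 2 ^ d, y + s / 2 ^ d) \<in> closed_segment (-1, s0) (1, t0)
    \<and> (x + 1 / 2 ^ d, y + t / 2 ^ d) \<in> closed_segment (-1, s0) (1, t0)"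
proof -
  note I = inv[OF assms]
  define H where "H = (1::real) / 2 ^ d"
  have e2: "a / 2 ^ d = a * H" for a :: real unfolding H_def by simp
  have hp: "0 < H" unfolding H_def by simp
  have A: "-1 \<le> x - H" "x + H \<le> 1" "y + s * H = s0 + (x - H + 1) * (t0 - s0) / 2"
    "t - s = t0 - s0" "s \<ge> 1" "t \<ge> 1"
    using I unfolding e2 by auto
  have B: "y + t * H = s0 + (x + H + 1) * (t0 - s0) / 2"
  proof -
    have tt: "t = s + (t0 - s0)" using A by simp
    have "y + t * H = (y + s * H) + H * (t0 - s0)" unfolding tt by (simp add: algebra_simps)
    also have "\<dots> = s0 + (x - H + 1) * (t0 - s0) / 2 + H * (t0 - s0)" using A(3) by simp
    also have "\<dots> = s0 + (x + H + 1) * (t0 - s0) / 2" by (simp add: field_simps)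
    finally show ?thesis .
  qed
  show ?thesis unfolding e2
    using A B hp by (auto intro!: seg_mem)
qed

end
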